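(* Let $\lambda\in(0,\bar\gamma)$ and let $m=m(n)=\left\lceil\frac{\log n}{(\bar\gamma-\lambda)^2}\right\rceil$. Then $$\lim_{n\to\infty}\mathbb{P}\Big(\frac1m\min_{i\in\bigcup_{h=1}^m\mathcal{S}_h}\sum_{j=1}^m\gamma_{i,j}\ge\lambda\Big)=1,$$ i.e. under the MC-MWC scheme, the symmetric rate vector in which every one of the $m$ sessions has arrival rate $\lambda$ lies in the achievable region with probability tending to $1$ as $n\to\infty$.
   Context: Model: a single transmitter serves $m$ multicast sessions $h=1,\dots,m$ over $m$ orthogonal channels $j=1,\dots,m$. Session $h$ has a random set of receivers $\mathcal{S}_h$ of size $s_h=|\mathcal{S}_h|\ge1$; the $s_h$ are i.i.d. with $\mathbb{E}[s_h]=n$ (a receiver may belong to several sessions). For receiver $i$ and channel $j$, $\gamma_{i,j}\in[0,1]$ is the capacity of receiver $i$ on channel $j$; the $\gamma_{i,j}$ are i.i.d. across receivers and channels, independent of the sets $\{\mathcal{S}_h\}$, with mean $\bar\gamma$. $\log$ is the natural logarithm. The MC-MWC scheme merges all sessions into one combined session (random linear network coding over all packets of all sessions, every channel used for the combined session). For MC-MWC the paper characterizes the achievable region: the symmetric rate vector $(\lambda,\dots,\lambda)$ (each session with arrival rate $\lambda$) is achievable if and only if $\frac1m\min_{i\in\bigcup_{h}\mathcal{S}_h}\sum_{j=1}^m\gamma_{i,j}\ge\lambda$. *)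

theory Defs
  imports "HOL-Probability.Probability"
begin

definition num_sessions :: "real \<Rightarrow> real \<Rightarrow> nat \<Rightarrow> nat" where
  "num_sessions gbar lam n = nat \<lceil>ln (real n) / (gbar - lam)\<^sup>2\<rceil>"

end

theory Submission imports Defs "HOL-Real_Asymp.Real_Asymp" begin

lemma Min_infinite_real: "\<not> finite (A::real set) \<Longrightarrow> Min A = Min {}"
  by (simp add: Min.eq_fold')

lemma fin_img_char:
  fixes g :: "nat \<Rightarrow> real"
  shows "finite (g ` U) \<longleftrightarrow> (\<exists>xs::nat list. (\<forall>j\<in>set xs. j \<in> U) \<and> (\<forall>i. i \<in> U \<longrightarrow> (\<exists>j\<in>set xs. g i = g j)))"
proof
  assume "finite (g ` U)"
  then obtain C where C: "C \<subseteq> U" "finite C" "g ` U = g ` C"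
    using finite_subset_image[of "g ` U" g U] by auto
  obtain xs where xs: "set xs = C" using C(2) finite_list by blast
  have "\<forall>i. i \<in> U \<longrightarrow> (\<exists>j\<in>set xs. g i = g j)"
  proof (intro allI impI)
    fix i assume "i \<in> U"
    then have "g i \<in> g ` C" using C(3) by blast
    then show "\<exists>j\<in>set xs. g i = g j" using xs by auto
  qed
  then show "\<exists>xs::nat list. (\<forall>j\<in>set xs. j \<in> U) \<and> (\<forall>i. i \<in> U \<longrightarrow> (\<exists>j\<in>set xs. g i = g j))"
    using C xs by auto
next
  assume "\<exists>xs::nat list. (\<forall>j\<in>set xs. j \<in> U) \<and> (\<forall>i. i \<in> U \<longrightarrow> (\<exists>j\<in>set xs. g i = g j))"
  then obtain xs where "\<forall>i. i \<in> U \<longrightarrow> (\<exists>j\<in>set xs. g i = g j)" by blast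
  then have "g ` U \<subseteq> g ` set xs" by auto
  then show "finite (g ` U)" by (rule finite_subset) auto
qed

lemma per_n:
  fixes M :: "'a measure" and S :: "nat \<Rightarrow> 'a \<Rightarrow> nat set" and \<gamma> :: "nat \<Rightarrow> nat \<Rightarrow> 'a \<Rightarrow> real"
    and m n :: nat and gbar lam :: real
  assumes P: "prob_space M" and m1: "m \<ge> 1" and n1: "n \<ge> 1" and lam_lt: "lam < gbar"
    and mlog: "ln (real n) \<le> real m * (gbar - lam)\<^sup>2"
    and S_rv: "\<And>h. h \<in> {1..m} \<Longrightarrow> S h \<in> measurable M (count_space UNIV)"
    and S_fin: "\<And>h. h \<in> {1..m} \<Longrightarrow> AE \<omega> in M. finite (S h \<omega>) \<and> card (S h \<omega>) \<ge> 1"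
    and s_mean: "\<And>h. h \<in> {1..m} \<Longrightarrow>
        integrable M (\<lambda>\<omega>. real (card (S h \<omega>))) \<and> (\<integral>\<omega>. real (card (S h \<omega>)) \<partial>M) = real n"
    and g_indep: "prob_space.indep_vars M (\<lambda>_. borel) (\<lambda>p \<omega>. \<gamma> (fst p) (snd p) \<omega>) (UNIV \<times> {1..m})"
    and g_range: "\<And>i j. j \<in> {1..m} \<Longrightarrow> AE \<omega> in M. 0 \<le> \<gamma> i j \<omega> \<and> \<gamma> i j \<omega> \<le> 1"
    and g_mean: "\<And>i j. j \<in> {1..m} \<Longrightarrow> (\<integral>\<omega>. \<gamma> i j \<omega> \<partial>M) = gbar"
    and indep_S_g: "prob_space.indep_set M
          (sets (vimage_algebra (space M) (\<lambda>\<omega>. \<lambda>h\<in>{1..m}. S h \<omega>)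
             (Pi\<^sub>M {1..m} (\<lambda>_. count_space UNIV))))
          (sets (vimage_algebra (space M) (\<lambda>\<omega>. \<lambda>p\<in>UNIV \<times> {1..m}. \<gamma> (fst p) (snd p) \<omega>)
             (Pi\<^sub>M (UNIV \<times> {1..m}) (\<lambda>_. borel))))"
  shows "measure M {\<omega> \<in> space M.
            (1 / real m) * Min ((\<lambda>i. \<Sum>j=1..m. \<gamma> i j \<omega>) ` (\<Union>h\<in>{1..m}. S h \<omega>)) \<ge> lam}
         \<ge> 1 - real m / real n"
proof -
  interpret prob_space M by (rule P)
  have gam_meas[measurable]: "\<gamma> i j \<in> borel_measurable M" if "j \<in> {1..m}" for i j
    using g_indep that unfolding indep_vars_def by auto
  have S_pred[measurable]: "(\<lambda>\<omega>. i \<in> S h \<omega>) \<in> measurable M (count_space UNIV)" if "h \<in> {1..m}" for i h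
  proof -
    have "{\<omega>\<in>space M. i \<in> S h \<omega>} = S h -` {A. i \<in> A} \<inter> space M" by auto
    also have "\<dots> \<in> sets M" using S_rv[OF that] by (rule measurable_sets) auto
    finally show ?thesis by (rule pred_def[THEN iffD2])
  qed
  define g where "g \<omega> i = (\<Sum>j=1..m. \<gamma> i j \<omega>)" for \<omega> i
  have g_meas[measurable]: "(\<lambda>\<omega>. g \<omega> i) \<in> borel_measurable M" for i
    unfolding g_def by measurable
  define x where "x = lam * real m"
  define E where "E = {\<omega> \<in> space M.
            (1 / real m) * Min ((\<lambda>i. \<Sum>j=1..m. \<gamma> i j \<omega>) ` (\<Union>h\<in>{1..m}. S h \<omega>)) \<ge> lam}"
  define Fin where "Fin \<omega> = ((\<exists>i. \<exists>h\<in>{1..m}. i \<in> S h \<omega>) \<and> (\<exists>xs::nat list. (\<forall>j\<in>set xs. \<exists>h\<in>{1..m}. j \<in> S h \<omega>)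
     \<and> (\<forall>i. (\<exists>h\<in>{1..m}. i \<in> S h \<omega>) \<longrightarrow> (\<exists>j\<in>set xs. g \<omega> i = g \<omega> j))))" for \<omega>
  have Fin_pred[measurable]: "Fin \<in> measurable M (count_space UNIV)" unfolding Fin_def by measurable
  have E_eq: "E = {\<omega> \<in> space M. (Fin \<omega> \<and> (\<forall>i. (\<exists>h\<in>{1..m}. i \<in> S h \<omega>) \<longrightarrow> x \<le> g \<omega> i)) \<or> (\<not> Fin \<omega> \<and> x \<le> Min {})}"
  unfolding E_def proof (intro Collect_cong conj_cong refl)
    fix \<omega> assume "\<omega> \<in> space M"
    define U where "U = (\<Union>h\<in>{1..m}. S h \<omega>)"
    have U_iff: "(\<exists>h\<in>{1..m}. i \<in> S h \<omega>) \<longleftrightarrow> i \<in> U" for i unfolding U_def by auto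
    have Vdef: "(\<lambda>i. \<Sum>j=1..m. \<gamma> i j \<omega>) ` (\<Union>h\<in>{1..m}. S h \<omega>) = g \<omega> ` U"
      unfolding U_def g_def by simp
    have FinI: "Fin \<omega> \<longleftrightarrow> U \<noteq> {} \<and> finite (g \<omega> ` U)"
      unfolding Fin_def U_iff fin_img_char by auto
    have mpos: "real m > 0" using m1 by simp
    have "lam \<le> 1 / real m * y \<longleftrightarrow> x \<le> y" for y
      using mpos unfolding x_def by (simp add: field_simps)
    then have "(lam \<le> 1 / real m * Min (g \<omega> ` U)) \<longleftrightarrow> x \<le> Min (g \<omega> ` U)" .
    also have "\<dots> \<longleftrightarrow> (Fin \<omega> \<and> (\<forall>i. i \<in> U \<longrightarrow> x \<le> g \<omega> i)) \<or> (\<not> Fin \<omega> \<and> x \<le> Min {})"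
    proof (cases "Fin \<omega>")
      case True
      then show ?thesis unfolding FinI by (auto simp: Min_ge_iff)
    next
      case False
      then have "Min (g \<omega> ` U) = Min {}" unfolding FinI
        using Min_infinite_real by auto
      then show ?thesis using False by simp
    qed
    finally show "(lam \<le> 1 / real m * Min ((\<lambda>i. \<Sum>j=1..m. \<gamma> i j \<omega>) ` (\<Union>h\<in>{1..m}. S h \<omega>))) \<longleftrightarrow>
      (Fin \<omega> \<and> (\<forall>i. (\<exists>h\<in>{1..m}. i \<in> S h \<omega>) \<longrightarrow> x \<le> g \<omega> i)) \<or> (\<not> Fin \<omega> \<and> x \<le> Min {})"
      unfolding Vdef U_iff .
  qed
  have E_sets: "E \<in> events" unfolding E_eq by measurable
  define \<delta> where "\<delta> = gbar - lam"
  have \<delta>pos: "\<delta> > 0" using lam_lt unfolding \<delta>_def by simp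
  define p where "p = exp (-2 * real m * \<delta>\<^sup>2)"
  define A where "A i = {\<omega> \<in> space M. g \<omega> i < x}" for i
  have A_sets[measurable]: "A i \<in> events" for i unfolding A_def by measurable
  define T where "T h i = {\<omega> \<in> space M. i \<in> S h \<omega>}" for h i
  have T_sets[measurable]: "T h i \<in> events" if "h \<in> {1..m}" for h i
    unfolding T_def using that by measurable
  have hoeff: "prob (A i) \<le> p" for i
  proof -
    let ?I = "{i} \<times> {1..m}"
    let ?X = "\<lambda>p \<omega>. \<gamma> (fst p) (snd p) \<omega>"
    interpret H: Hoeffding_ineq M ?I ?X "\<lambda>_. 0" "\<lambda>_. 1" "\<Sum>p\<in>?I. expectation (?X p)"
    proof unfold_locales
      show "finite ?I" by simp
      show "indep_vars (\<lambda>_. borel) ?X ?I"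
        by (rule indep_vars_subset[OF g_indep]) auto
      fix q assume "q \<in> ?I"
      then show "AE \<omega> in M. ?X q \<omega> \<in> {0..1}"
        using g_range[of "snd q" "fst q"] by auto
    qed simp
    have sumI: "(\<Sum>q\<in>?I. f q) = (\<Sum>j=1..m. f (i, j))" for f :: "nat \<times> nat \<Rightarrow> real"
    proof -
      have "?I = (\<lambda>j. (i, j)) ` {1..m}" by auto
      then show ?thesis by (simp add: sum.reindex inj_on_def)
    qed
    have mu: "(\<Sum>q\<in>?I. expectation (?X q)) = real m * gbar"
      unfolding sumI using g_mean by simp
    have d: "(\<Sum>q\<in>?I. (1 - 0 :: real)\<^sup>2) = real m" unfolding sumI by simp
    have "prob {\<omega> \<in> space M. (\<Sum>q\<in>?I. ?X q \<omega>) \<le> (\<Sum>q\<in>?I. expectation (?X q)) - real m * \<delta>}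
        \<le> exp (-2 * (real m * \<delta>)\<^sup>2 / (\<Sum>q\<in>?I. (1 - 0 :: real)\<^sup>2))"
      by (rule H.Hoeffding_ineq_le) (use \<delta>pos m1 d in auto)
    also have "\<dots> = p" unfolding d p_def using m1 by (simp add: power2_eq_square)
    finally have *: "prob {\<omega> \<in> space M. (\<Sum>q\<in>?I. ?X q \<omega>) \<le> (\<Sum>q\<in>?I. expectation (?X q)) - real m * \<delta>} \<le> p" .
    have "A i \<subseteq> {\<omega> \<in> space M. (\<Sum>q\<in>?I. ?X q \<omega>) \<le> (\<Sum>q\<in>?I. expectation (?X q)) - real m * \<delta>}"
      unfolding A_def mu sumI g_def x_def \<delta>_def by (auto simp: algebra_simps)
    then have "prob (A i) \<le> prob {\<omega> \<in> space M. (\<Sum>q\<in>?I. ?X q \<omega>) \<le> (\<Sum>q\<in>?I. expectation (?X q)) - real m * \<delta>}"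
      by (intro finite_measure_mono) measurable
    with * show ?thesis by simp
  qed
  have indepTA: "prob (T h i \<inter> A i) = prob (T h i) * prob (A i)" if h: "h \<in> {1..m}" for h i
  proof (rule indep_setD[OF indep_S_g])
    let ?f = "\<lambda>\<omega>. \<lambda>h\<in>{1..m}. S h \<omega>"
    have "{F \<in> space (Pi\<^sub>M {1..m} (\<lambda>_. count_space UNIV)). i \<in> F h} \<in> sets (Pi\<^sub>M {1..m} (\<lambda>_. count_space (UNIV :: nat set set)))"
    proof -
      have "(\<lambda>F. i \<in> F h) \<in> measurable (Pi\<^sub>M {1..m} (\<lambda>_. count_space (UNIV :: nat set set))) (count_space UNIV)"
        using measurable_compose[OF measurable_component_singleton[OF h], where g="\<lambda>A. i \<in> A" and L="count_space UNIV"] by simp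
      then show ?thesis by (rule pred_def[THEN iffD1])
    qed
    then have "?f -` {F \<in> space (Pi\<^sub>M {1..m} (\<lambda>_. count_space UNIV)). i \<in> F h} \<inter> space M
        \<in> sets (vimage_algebra (space M) ?f (Pi\<^sub>M {1..m} (\<lambda>_. count_space UNIV)))"
      by (rule in_vimage_algebra)
    also have "?f -` {F \<in> space (Pi\<^sub>M {1..m} (\<lambda>_. count_space UNIV)). i \<in> F h} \<inter> space M = T h i"
      unfolding T_def using h by (auto simp: space_PiM)
    finally show "T h i \<in> sets (vimage_algebra (space M) ?f (Pi\<^sub>M {1..m} (\<lambda>_. count_space UNIV)))" .
  next
    let ?f = "\<lambda>\<omega>. \<lambda>p\<in>UNIV \<times> {1..m}. \<gamma> (fst p) (snd p) \<omega>"
    have "{F \<in> space (Pi\<^sub>M (UNIV \<times> {1..m}) (\<lambda>_. borel)). (\<Sum>j=1..m. F (i, j)) < x} \<in> sets (Pi\<^sub>M (UNIV \<times> {1..m}) (\<lambda>_. (borel :: real measure)))"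
      by measurable
    then have "?f -` {F \<in> space (Pi\<^sub>M (UNIV \<times> {1..m}) (\<lambda>_. borel)). (\<Sum>j=1..m. F (i, j)) < x} \<inter> space M
        \<in> sets (vimage_algebra (space M) ?f (Pi\<^sub>M (UNIV \<times> {1..m}) (\<lambda>_. borel)))"
      by (rule in_vimage_algebra)
    also have "?f -` {F \<in> space (Pi\<^sub>M (UNIV \<times> {1..m}) (\<lambda>_. borel)). (\<Sum>j=1..m. F (i, j)) < x} \<inter> space M = A i"
      unfolding A_def g_def by (auto simp: space_PiM)
    finally show "A i \<in> sets (vimage_algebra (space M) ?f (Pi\<^sub>M (UNIV \<times> {1..m}) (\<lambda>_. borel)))" .
  qed
  have sumT: "(\<Sum>i. emeasure M (T h i)) = ennreal (real n)" if h: "h \<in> {1..m}" for h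
  proof -
    have "(\<Sum>i. emeasure M (T h i)) = (\<Sum>i. \<integral>\<^sup>+\<omega>. indicator (T h i) \<omega> \<partial>M)"
      using h by (simp add: nn_integral_indicator)
    also have "\<dots> = \<integral>\<^sup>+\<omega>. (\<Sum>i. indicator (T h i) \<omega>) \<partial>M"
      by (rule nn_integral_suminf[symmetric]) (use h in measurable)
    also have "\<dots> = \<integral>\<^sup>+\<omega>. ennreal (real (card (S h \<omega>))) \<partial>M"
    proof (rule nn_integral_cong_AE)
      show "AE \<omega> in M. (\<Sum>i. indicator (T h i) \<omega>) = ennreal (real (card (S h \<omega>)))"
        using S_fin[OF h] AE_space
      proof eventually_elim
        case (elim \<omega>)
        have "(\<Sum>i. indicator (T h i) \<omega> :: ennreal) = (\<Sum>i\<in>S h \<omega>. indicator (T h i) \<omega>)"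
          by (rule suminf_finite) (use elim in \<open>auto simp: T_def\<close>)
        also have "\<dots> = (\<Sum>i\<in>S h \<omega>. 1)"
          by (rule sum.cong) (use elim in \<open>auto simp: T_def\<close>)
        finally show ?case by (simp add: ennreal_of_nat_eq_real_of_nat)
      qed
    qed
    also have "\<dots> = ennreal (\<integral>\<omega>. real (card (S h \<omega>)) \<partial>M)"
      by (rule nn_integral_eq_integral) (use s_mean[OF h] in auto)
    also have "\<dots> = ennreal (real n)" using s_mean[OF h] by simp
    finally show ?thesis .
  qed
  have p_nn: "p \<ge> 0" unfolding p_def by simp
  have UB: "emeasure M (\<Union>i. T h i \<inter> A i) \<le> ennreal (p * real n)" if h: "h \<in> {1..m}" for h
  proof -
    have "emeasure M (\<Union>i. T h i \<inter> A i) \<le> (\<Sum>i. emeasure M (T h i \<inter> A i))"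
      by (rule emeasure_subadditive_countably) (use h in auto)
    also have "\<dots> \<le> (\<Sum>i. emeasure M (T h i) * ennreal p)"
    proof (rule suminf_le)
      fix i
      have "emeasure M (T h i \<inter> A i) = ennreal (prob (T h i) * prob (A i))"
        using indepTA[OF h] by (simp add: emeasure_eq_measure)
      also have "\<dots> \<le> ennreal (prob (T h i) * p)"
        by (intro ennreal_leI mult_left_mono hoeff) auto
      also have "\<dots> = emeasure M (T h i) * ennreal p"
        by (simp add: emeasure_eq_measure ennreal_mult p_nn)
      finally show "emeasure M (T h i \<inter> A i) \<le> emeasure M (T h i) * ennreal p" .
    qed auto
    also have "\<dots> = (\<Sum>i. emeasure M (T h i)) * ennreal p"
      by (rule ennreal_suminf_multc)
    also have "\<dots> = ennreal (p * real n)" using sumT[OF h] p_nn by (simp add: ennreal_mult mult.commute)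
    finally show ?thesis .
  qed
  have "AE \<omega> in M. \<forall>h\<in>{1..m}. finite (S h \<omega>) \<and> card (S h \<omega>) \<ge> 1"
    using S_fin by (subst AE_finite_all) auto
  then obtain N0 where N0: "{\<omega> \<in> space M. \<not> (\<forall>h\<in>{1..m}. finite (S h \<omega>) \<and> card (S h \<omega>) \<ge> 1)} \<subseteq> N0"
    "emeasure M N0 = 0" "N0 \<in> sets M" by (rule AE_E)
  define W where "W = (\<Union>h\<in>{1..m}. \<Union>i. T h i \<inter> A i)"
  have W_sets: "W \<in> events" unfolding W_def by (intro sets.finite_UN sets.countable_UN') auto
  have incl: "space M - E \<subseteq> N0 \<union> W"
  proof
    fix \<omega> assume \<omega>: "\<omega> \<in> space M - E"
    show "\<omega> \<in> N0 \<union> W"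
    proof (cases "\<forall>h\<in>{1..m}. finite (S h \<omega>) \<and> card (S h \<omega>) \<ge> 1")
      case False then show ?thesis using N0(1) \<omega> by auto
    next
      case True
      have "Fin \<omega>"
      proof -
        have "1 \<le> card (S 1 \<omega>)" using True m1 by auto
        then have "S 1 \<omega> \<noteq> {}" by (metis card.empty not_one_le_zero)
        then obtain i where "i \<in> S 1 \<omega>" by blast
        moreover have "finite (g \<omega> ` (\<Union>h\<in>{1..m}. S h \<omega>))" using True by auto
        moreover obtain xs :: "nat list" where "(\<forall>j\<in>set xs. j \<in> (\<Union>h\<in>{1..m}. S h \<omega>)) \<and>
            (\<forall>i. i \<in> (\<Union>h\<in>{1..m}. S h \<omega>) \<longrightarrow> (\<exists>j\<in>set xs. g \<omega> i = g \<omega> j))"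
          using calculation(2) fin_img_char by blast
        ultimately show ?thesis unfolding Fin_def
          using m1 by (auto intro!: exI[of _ xs] bexI[of _ 1])
      qed
      then obtain i h where "h \<in> {1..m}" "i \<in> S h \<omega>" "\<not> x \<le> g \<omega> i"
        using \<omega> unfolding E_eq by auto
      then have "\<omega> \<in> T h i \<inter> A i" using \<omega> unfolding T_def A_def by auto
      then show ?thesis using \<open>h \<in> {1..m}\<close> unfolding W_def by blast
    qed
  qed
  have "emeasure M (space M - E) \<le> emeasure M (N0 \<union> W)"
    by (rule emeasure_mono[OF incl]) (use N0 W_sets in auto)
  also have "\<dots> \<le> emeasure M N0 + emeasure M W"
    by (rule emeasure_subadditive) (use N0 W_sets in auto)
  also have "\<dots> = emeasure M W" using N0 by simp
  also have "\<dots> \<le> (\<Sum>h\<in>{1..m}. emeasure M (\<Union>i. T h i \<inter> A i))"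
    unfolding W_def by (rule emeasure_subadditive_finite) auto
  also have "\<dots> \<le> (\<Sum>h\<in>{1..m}. ennreal (p * real n))"
    by (rule sum_mono) (rule UB)
  also have "\<dots> = ennreal (real m * (p * real n))"
    using p_nn by (simp add: ennreal_of_nat_eq_real_of_nat[symmetric] ennreal_mult)
  finally have "prob (space M - E) \<le> real m * (p * real n)"
    using p_nn by (simp add: emeasure_eq_measure ennreal_le_iff)
  moreover have "real m * (p * real n) \<le> real m / real n"
  proof -
    have npos: "real n > 0" using n1 by simp
    have ex: "exp (-2 * t) = inverse (exp t * exp t)" for t :: real
      by (simp add: exp_add[symmetric] exp_minus[symmetric])
    have "p \<le> exp (-2 * ln (real n))"
      unfolding p_def \<delta>_def using mlog by simp
    also have "\<dots> = inverse (real n * real n)"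
      unfolding ex using npos by simp
    finally have "p * real n \<le> inverse (real n * real n) * real n"
      using npos by (intro mult_right_mono) auto
    also have "\<dots> = 1 / real n" using npos by (simp add: field_simps)
    finally have "p * real n \<le> 1 / real n" .
    then have "real m * (p * real n) \<le> real m * (1 / real n)"
      by (intro mult_left_mono) auto
    then show ?thesis by simp
  qed
  ultimately have "prob (space M - E) \<le> real m / real n" by linarith
  then show ?thesis using prob_compl[OF E_sets] unfolding E_def by linarith
qed

theorem theorem2:
  fixes M :: "nat \<Rightarrow> 'a measure"
    and S :: "nat \<Rightarrow> nat \<Rightarrow> 'a \<Rightarrow> nat set"
    and \<gamma> :: "nat \<Rightarrow> nat \<Rightarrow> nat \<Rightarrow> 'a \<Rightarrow> real"
    and gbar lam :: real
  defines "m \<equiv> num_sessions gbar lam"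
  assumes lam_pos: "0 < lam" and lam_lt: "lam < gbar"
    and prob: "\<And>n. n \<ge> 1 \<Longrightarrow> prob_space (M n)"
    and S_rv: "\<And>n h. n \<ge> 1 \<Longrightarrow> h \<in> {1..m n} \<Longrightarrow>
        S n h \<in> measurable (M n) (count_space UNIV)"
    and S_fin: "\<And>n h. n \<ge> 1 \<Longrightarrow> h \<in> {1..m n} \<Longrightarrow>
        AE \<omega> in M n. finite (S n h \<omega>) \<and> card (S n h \<omega>) \<ge> 1"
    and s_indep: "\<And>n. n \<ge> 1 \<Longrightarrow>
        prob_space.indep_vars (M n) (\<lambda>_. count_space UNIV) (\<lambda>h \<omega>. card (S n h \<omega>)) {1..m n}"
    and s_ident: "\<And>n h h'. n \<ge> 1 \<Longrightarrow> h \<in> {1..m n} \<Longrightarrow> h' \<in> {1..m n} \<Longrightarrow>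
        distr (M n) (count_space UNIV) (\<lambda>\<omega>. card (S n h \<omega>))
          = distr (M n) (count_space UNIV) (\<lambda>\<omega>. card (S n h' \<omega>))"
    and s_mean: "\<And>n h. n \<ge> 1 \<Longrightarrow> h \<in> {1..m n} \<Longrightarrow>
        integrable (M n) (\<lambda>\<omega>. real (card (S n h \<omega>))) \<and>
        (\<integral>\<omega>. real (card (S n h \<omega>)) \<partial>M n) = real n"
    and g_indep: "\<And>n. n \<ge> 1 \<Longrightarrow>
        prob_space.indep_vars (M n) (\<lambda>_. borel) (\<lambda>p \<omega>. \<gamma> n (fst p) (snd p) \<omega>)
          (UNIV \<times> {1..m n})"
    and g_ident: "\<And>n i j i' j'. n \<ge> 1 \<Longrightarrow> j \<in> {1..m n} \<Longrightarrow> j' \<in> {1..m n} \<Longrightarrow>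
        distr (M n) borel (\<gamma> n i j) = distr (M n) borel (\<gamma> n i' j')"
    and g_range: "\<And>n i j. n \<ge> 1 \<Longrightarrow> j \<in> {1..m n} \<Longrightarrow>
        AE \<omega> in M n. 0 \<le> \<gamma> n i j \<omega> \<and> \<gamma> n i j \<omega> \<le> 1"
    and g_mean: "\<And>n i j. n \<ge> 1 \<Longrightarrow> j \<in> {1..m n} \<Longrightarrow>
        (\<integral>\<omega>. \<gamma> n i j \<omega> \<partial>M n) = gbar"
    and indep_S_g: "\<And>n. n \<ge> 1 \<Longrightarrow>
        prob_space.indep_set (M n)
          (sets (vimage_algebra (space (M n)) (\<lambda>\<omega>. \<lambda>h\<in>{1..m n}. S n h \<omega>)
             (Pi\<^sub>M {1..m n} (\<lambda>_. count_space UNIV))))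
          (sets (vimage_algebra (space (M n)) (\<lambda>\<omega>. \<lambda>p\<in>UNIV \<times> {1..m n}. \<gamma> n (fst p) (snd p) \<omega>)
             (Pi\<^sub>M (UNIV \<times> {1..m n}) (\<lambda>_. borel))))"
  shows "(\<lambda>n. measure (M n) {\<omega> \<in> space (M n).
            (1 / real (m n)) * Min ((\<lambda>i. \<Sum>j=1..m n. \<gamma> n i j \<omega>) ` (\<Union>h\<in>{1..m n}. S n h \<omega>)) \<ge> lam})
         \<longlonglongrightarrow> 1"
proof -
  define \<delta> where "\<delta> = gbar - lam"
  have \<delta>pos: "\<delta> > 0" using lam_lt unfolding \<delta>_def by simp
  have m_eq: "m n = nat \<lceil>ln (real n) / \<delta>\<^sup>2\<rceil>" for n
    unfolding m_def num_sessions_def \<delta>_def ..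
  have bounds: "1 - real (m n) / real n \<le> measure (M n) {\<omega> \<in> space (M n).
            (1 / real (m n)) * Min ((\<lambda>i. \<Sum>j=1..m n. \<gamma> n i j \<omega>) ` (\<Union>h\<in>{1..m n}. S n h \<omega>)) \<ge> lam}
        \<and> measure (M n) {\<omega> \<in> space (M n).
            (1 / real (m n)) * Min ((\<lambda>i. \<Sum>j=1..m n. \<gamma> n i j \<omega>) ` (\<Union>h\<in>{1..m n}. S n h \<omega>)) \<ge> lam} \<le> 1"
    if n2: "n \<ge> 2" for n
  proof
    have n1: "n \<ge> 1" using n2 by simp
    have lnpos: "ln (real n) > 0" using n2 by simp
    have ge: "real (m n) \<ge> ln (real n) / \<delta>\<^sup>2" unfolding m_eq by linarith
    moreover have "ln (real n) / \<delta>\<^sup>2 > 0" using lnpos \<delta>pos by simp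
    ultimately have m1: "m n \<ge> 1" by simp
    have mlog: "ln (real n) \<le> real (m n) * (gbar - lam)\<^sup>2"
      using ge \<delta>pos unfolding \<delta>_def[symmetric] by (simp add: field_simps)
    show "1 - real (m n) / real n \<le> measure (M n) {\<omega> \<in> space (M n).
            (1 / real (m n)) * Min ((\<lambda>i. \<Sum>j=1..m n. \<gamma> n i j \<omega>) ` (\<Union>h\<in>{1..m n}. S n h \<omega>)) \<ge> lam}"
      by (rule per_n[OF prob[OF n1] m1 n1 lam_lt mlog S_rv[OF n1] S_fin[OF n1] s_mean[OF n1] g_indep[OF n1]
            g_range[OF n1] g_mean[OF n1] indep_S_g[OF n1]])
    show "measure (M n) {\<omega> \<in> space (M n).
            (1 / real (m n)) * Min ((\<lambda>i. \<Sum>j=1..m n. \<gamma> n i j \<omega>) ` (\<Union>h\<in>{1..m n}. S n h \<omega>)) \<ge> lam} \<le> 1"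
      using prob_space.prob_le_1[OF prob[OF n1]] .
  qed
  have mn_le: "real (m n) / real n \<le> (ln (real n) / \<delta>\<^sup>2 + 1) / real n" if "n \<ge> 2" for n
  proof -
    have "ln (real n) / \<delta>\<^sup>2 \<ge> 0" using that by simp
    then have "real (m n) \<le> ln (real n) / \<delta>\<^sup>2 + 1" unfolding m_eq by linarith
    then show ?thesis by (intro divide_right_mono) auto
  qed
  have lim0: "(\<lambda>n. (ln (real n) / \<delta>\<^sup>2 + 1) / real n) \<longlonglongrightarrow> 0"
  proof -
    have a: "(\<lambda>n. ln (real n) / real n) \<longlonglongrightarrow> 0" by real_asymp
    have b: "(\<lambda>n. 1 / real n) \<longlonglongrightarrow> 0" by real_asymp
    have "(\<lambda>n. (1 / \<delta>\<^sup>2) * (ln (real n) / real n) + 1 / real n) \<longlonglongrightarrow> (1 / \<delta>\<^sup>2) * 0 + 0"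
      by (intro tendsto_add tendsto_mult tendsto_const a b)
    moreover have "(\<lambda>n. (1 / \<delta>\<^sup>2) * (ln (real n) / real n) + 1 / real n) = (\<lambda>n. (ln (real n) / \<delta>\<^sup>2 + 1) / real n)"
      by (rule ext) (simp add: field_simps add_divide_distrib)
    ultimately show ?thesis by simp
  qed
  have "(\<lambda>n. real (m n) / real n) \<longlonglongrightarrow> 0"
    by (rule tendsto_sandwich[OF _ _ tendsto_const lim0])
       (auto intro!: eventually_sequentiallyI[of 2] mn_le)
  then have "(\<lambda>n. 1 - real (m n) / real n) \<longlonglongrightarrow> 1"
    using tendsto_diff[OF tendsto_const, of _ 0 sequentially 1] by simp
  note lim1 = this
  show ?thesis
    by (rule tendsto_sandwich[OF _ _ lim1 tendsto_const])
       (auto intro!: eventually_sequentiallyI[of 2] dest: bounds)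
qed

end
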